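(* Consider the DSA algorithm described in the context, under conditions (a)–(c) on the weights and assuming every $f_{n,i}$ is differentiable and $\mu$-strongly convex with $L$-Lipschitz gradient. Then for any constant $\eta>0$ and every $t\ge0$, \begin{align*} \mathbb{E}\left[\|\mathbf{u}^{t+1}-\mathbf{u}^*\|_{\mathbf{G}}^2\mid\mathcal{F}^t\right]&\le\|\mathbf{u}^t-\mathbf{u}^*\|_{\mathbf{G}}^2-2\,\mathbb{E}\left[\|\mathbf{x}^{t+1}-\mathbf{x}^*\|_{\mathbf{I}+\mathbf{Z}-2\tilde{\mathbf{Z}}}^2\mid\mathcal{F}^t\right]+\frac{4\alpha L}{\eta}p^t\\ &\quad-\mathbb{E}\left[\|\mathbf{x}^{t+1}-\mathbf{x}^t\|_{\tilde{\mathbf{Z}}-2\alpha\eta\mathbf{I}}^2\mid\mathcal{F}^t\right]-\mathbb{E}\left[\|\mathbf{v}^{t+1}-\mathbf{v}^t\|^2\mid\mathcal{F}^t\right]\\ &\quad-\left(\frac{4\alpha\mu}{L}-\frac{2\alpha(2L-\mu)}{\eta}\right)\left(f(\mathbf{x}^{t})-f(\mathbf{x}^* )-\nabla f(\mathbf{x}^* )^T(\mathbf{x}^{t}-\mathbf{x}^* )\right). \end{align*}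
   Context: Problem: a connected network of $N$ nodes; node $n$ holds $q_n$ functions $f_{n,i}:\mathbb{R}^p\to\mathbb{R}$, each differentiable, $\mu$-strongly convex, with $L$-Lipschitz gradient; $f_n:=\frac1{q_n}\sum_i f_{n,i}$, $\tilde{\mathbf{x}}^*:=\arg\min_{\mathbf{x}}\sum_n f_n(\mathbf{x})$. For $\mathbf{x}=[\mathbf{x}_1;\dots;\mathbf{x}_N]\in\mathbb{R}^{Np}$, $f(\mathbf{x}):=\sum_n f_n(\mathbf{x}_n)$, $\mathbf{x}^*:=[\tilde{\mathbf{x}}^*;\dots;\tilde{\mathbf{x}}^*]$. Weights: $\mathbf{W},\tilde{\mathbf{W}}\in\mathbb{R}^{N\times N}$ with entries nonzero only for $m=n$ or $m$ a neighbor of $n$, satisfying (a) symmetry; (b) $\mathrm{null}(\mathbf{I}-\tilde{\mathbf{W}})\supseteq\mathrm{span}(\mathbf{1})$, $\mathrm{null}(\mathbf{I}-\mathbf{W})=\mathrm{span}(\mathbf{1})$, $\mathrm{null}(\tilde{\mathbf{W}}-\mathbf{W})=\mathrm{span}(\mathbf{1})$; (c) $\mathbf{W}\preceq\tilde{\mathbf{W}}\preceq(\mathbf{I}+\mathbf{W})/2$, $\tilde{\mathbf{W}}\succ0$. $\mathbf{Z}:=\mathbf{W}\otimes\mathbf{I}_p$, $\tilde{\mathbf{Z}}:=\tilde{\mathbf{W}}\otimes\mathbf{I}_p$, $\mathbf{U}:=(\tilde{\mathbf{Z}}-\mathbf{Z})^{1/2}$. DSA: stepsize $\alpha>0$, initial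 $\mathbf{x}_n^0$, $\mathbf{y}_{n,i}^0=\mathbf{x}_n^0$. At each $t\ge0$ node $n$ draws $i_n^t$ uniformly from $\{1,\dots,q_n\}$ independently of the past, sets $\hat{\mathbf{g}}_n^t:=\nabla f_{n,i_n^t}(\mathbf{x}_n^t)-\nabla f_{n,i_n^t}(\mathbf{y}_{n,i_n^t}^t)+\frac1{q_n}\sum_{i}\nabla f_{n,i}(\mathbf{y}_{n,i}^t)$, and $\mathbf{y}_{n,i}^{t+1}=\mathbf{x}_n^t$ if $i=i_n^t$, else $\mathbf{y}_{n,i}^{t+1}=\mathbf{y}_{n,i}^t$. With $\hat{\mathbf{g}}^t:=[\hat{\mathbf{g}}_1^t;\dots;\hat{\mathbf{g}}_N^t]$: $\mathbf{x}^1=\mathbf{Z}\mathbf{x}^0-\alpha\hat{\mathbf{g}}^0$, $\mathbf{x}^{t+1}=(\mathbf{I}+\mathbf{Z})\mathbf{x}^t-\tilde{\mathbf{Z}}\mathbf{x}^{t-1}-\alpha[\hat{\mathbf{g}}^t-\hat{\mathbf{g}}^{t-1}]$ for $t\ge1$. Dual variables $\mathbf{v}^t:=\sum_{s=0}^t\mathbf{U}\mathbf{x}^s$; $\mathbf{v}^*$ is the vector in the column space of $\mathbf{U}$ with $\alpha\nabla f(\mathbf{x}^* )+\mathbf{U}\mathbf{v}^*=\mathbf{0}$. Set $\mathbf{u}^t:=[\mathbf{x}^t;\mathbf{v}^t]$, $\mathbf{u}^*:=[\mathbf{x}^*;\mathbf{v}^*]$, $\mathbf{G}:=\mathrm{diag}(\tilde{\mathbf{Z}},\mathbf{I})\in\mathbb{R}^{2Np\times2Np}$.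 For a symmetric matrix $\mathbf{A}$, $\|\mathbf{z}\|_{\mathbf{A}}^2:=\mathbf{z}^T\mathbf{A}\mathbf{z}$. $\mathcal{F}^t$ is the sigma-algebra of the history up to time $t$. Define $$p^t:=\sum_{n=1}^N\frac1{q_n}\sum_{i=1}^{q_n}\left(f_{n,i}(\mathbf{y}_{n,i}^t)-f_{n,i}(\tilde{\mathbf{x}}^* )-\nabla f_{n,i}(\tilde{\mathbf{x}}^* )^T(\mathbf{y}_{n,i}^t-\tilde{\mathbf{x}}^* )\right).$$ *)

theory Defs
  imports "HOL-Analysis.Analysis"
begin

text \<open>Nodes are the elements of a finite type 'n; R^p is real^'p.
  A stacked vector x = [x_1;...;x_N] in R^{Np} is an element of real^'p^'n
  (row n is x_n).  An N x N matrix A acts on it as A \<otimes> I_p, i.e. by the matrix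
  product A ** x.  The local functions of node n are f n i, i < q n.\<close>

definition mu_strongly_convex :: "real \<Rightarrow> ('a::real_inner \<Rightarrow> real) \<Rightarrow> bool" where
  "mu_strongly_convex mu h \<longleftrightarrow> convex_on UNIV (\<lambda>z. h z - (mu / 2) * (norm z)\<^sup>2)"

definition psd :: "real^'n^'n \<Rightarrow> bool" where
  "psd A \<longleftrightarrow> (\<forall>z. 0 \<le> z \<bullet> (A *v z))"

definition pd :: "real^'n^'n \<Rightarrow> bool" where
  "pd A \<longleftrightarrow> (\<forall>z. z \<noteq> 0 \<longrightarrow> 0 < z \<bullet> (A *v z))"

definition msqrt :: "real^'n^'n \<Rightarrow> real^'n^'n" where
  "msqrt A = (THE S. transpose S = S \<and> psd S \<and> S ** S = A)"

definition qf :: "real^'n^'n \<Rightarrow> real^'p^'n \<Rightarrow> real" where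
  "qf A x = (\<Sum>n\<in>UNIV. \<Sum>m\<in>UNIV. A$n$m * (x$n \<bullet> x$m))"

definition ones :: "real^'n" where "ones = (\<chi> n. 1)"

definition ghat :: "('n \<Rightarrow> nat \<Rightarrow> real^'p \<Rightarrow> real^'p) \<Rightarrow> ('n \<Rightarrow> nat) \<Rightarrow> ('n \<Rightarrow> nat)
     \<Rightarrow> real^'p^'n \<Rightarrow> ('n \<Rightarrow> nat \<Rightarrow> real^'p) \<Rightarrow> real^'p^'n" where
  "ghat g q c x y = (\<chi> n. g n (c n) (x$n) - g n (c n) (y n (c n))
       + (1 / real (q n)) *\<^sub>R (\<Sum>i<q n. g n i (y n i)))"

definition yupd :: "('n \<Rightarrow> nat) \<Rightarrow> real^'p^'n \<Rightarrow> ('n \<Rightarrow> nat \<Rightarrow> real^'p) \<Rightarrow> ('n \<Rightarrow> nat \<Rightarrow> real^'p)" where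
  "yupd c x y = (\<lambda>n i. if i = c n then x$n else y n i)"

text \<open>DSA trajectory: dsa ... t = (x^t, y^t), where om t n = i_n^t is the index drawn
  by node n at time t.\<close>
fun dsa :: "real^'n^'n \<Rightarrow> real^'n^'n \<Rightarrow> real \<Rightarrow> ('n \<Rightarrow> nat \<Rightarrow> real^'p \<Rightarrow> real^'p)
     \<Rightarrow> ('n \<Rightarrow> nat) \<Rightarrow> real^'p^'n \<Rightarrow> (nat \<Rightarrow> 'n \<Rightarrow> nat) \<Rightarrow> nat
     \<Rightarrow> (real^'p^'n) \<times> ('n \<Rightarrow> nat \<Rightarrow> real^'p)" where
  "dsa W Wt \<alpha> g q x0 om 0 = (x0, \<lambda>n i. x0$n)"
| "dsa W Wt \<alpha> g q x0 om (Suc 0) =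
     (let x = fst (dsa W Wt \<alpha> g q x0 om 0); y = snd (dsa W Wt \<alpha> g q x0 om 0) in
      (W ** x - \<alpha> *\<^sub>R ghat g q (om 0) x y, yupd (om 0) x y))"
| "dsa W Wt \<alpha> g q x0 om (Suc (Suc t)) =
     (let x' = fst (dsa W Wt \<alpha> g q x0 om (Suc t)); y' = snd (dsa W Wt \<alpha> g q x0 om (Suc t));
          x = fst (dsa W Wt \<alpha> g q x0 om t); y = snd (dsa W Wt \<alpha> g q x0 om t) in
      ((mat 1 + W) ** x' - Wt ** x
         - \<alpha> *\<^sub>R (ghat g q (om (Suc t)) x' y' - ghat g q (om t) x y),
       yupd (om (Suc t)) x' y'))"

definition dsa_v :: "real^'n^'n \<Rightarrow> real^'n^'n \<Rightarrow> real \<Rightarrow> ('n \<Rightarrow> nat \<Rightarrow> real^'p \<Rightarrow> real^'p)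
     \<Rightarrow> ('n \<Rightarrow> nat) \<Rightarrow> real^'p^'n \<Rightarrow> (nat \<Rightarrow> 'n \<Rightarrow> nat) \<Rightarrow> nat \<Rightarrow> real^'p^'n" where
  "dsa_v W Wt \<alpha> g q x0 om t = (\<Sum>s\<le>t. msqrt (Wt - W) ** fst (dsa W Wt \<alpha> g q x0 om s))"

text \<open>Conditional expectation given F^t of a quantity X depending on the draws om:
  the draws i^t = om t are uniform on prod_n {0..<q n}, independent of the past,
  so E[X | F^t](om) is the average of X over all replacements of om t.\<close>
definition condE :: "('n::finite \<Rightarrow> nat) \<Rightarrow> nat \<Rightarrow> ((nat \<Rightarrow> 'n \<Rightarrow> nat) \<Rightarrow> real)
     \<Rightarrow> (nat \<Rightarrow> 'n \<Rightarrow> nat) \<Rightarrow> real" where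
  "condE q t X om = (\<Sum>c\<in>PiE UNIV (\<lambda>n. {..<q n}). X (om(t := c))) / (\<Prod>n\<in>UNIV. real (q n))"

end

theory Submission
  imports Defs "HOL-Analysis.Analysis"
begin


lemma sym_dot:
  fixes A :: "real^'n^'n"
  assumes "transpose A = A"
  shows "x \<bullet> (A *v y) = (A *v x) \<bullet> y"
proof -
  have "x \<bullet> (A *v y) = (x v* A) \<bullet> y" by (simp add: dot_lmul_matrix)
  also have "x v* A = transpose A *v x" by simp
  finally show ?thesis using assms by simp
qed

lemma quad_zero:
  fixes c d :: real
  assumes h: "\<And>t. 2*t*c \<le> t^2*d"
  shows "c = 0"
proof (rule ccontr)
  assume c: "c \<noteq> 0"
  have cc: "c*c > 0" using c by (cases "c > 0") (auto simp: zero_less_mult_iff)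
  have h2: "2*u*(c*c) \<le> u^2*(c*c)*d" for u
    using h[of "u*c"] by (simp add: power2_eq_square algebra_simps)
  have "2*(c*c) \<le> (c*c)*d" using h2[of 1] by simp
  hence "(c*c)*2 \<le> (c*c)*d" by (simp add: mult.commute)
  hence d: "d \<ge> 2" using mult_le_cancel_left_pos[OF cc] by simp
  have "2*(1/d)*(c*c) \<le> (1/d)^2*(c*c)*d" by (rule h2)
  also have "\<dots> = (1/d)*(c*c)" using d by (simp add: power2_eq_square)
  finally have "(1/d)*(c*c) \<le> 0" by simp
  moreover have "(1/d)*(c*c) > 0" using d cc by simp
  ultimately show False by simp
qed

lemma eigen_exists:
  fixes A :: "real^'n^'n"
  assumes sym: "transpose A = A" and V: "subspace V" and nz: "V \<noteq> {0}"
    and inv: "\<And>x. x \<in> V \<Longrightarrow> A *v x \<in> V"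
  shows "\<exists>e\<in>V. norm e = 1 \<and> A *v e = (e \<bullet> (A *v e)) *\<^sub>R e"
proof -
  define K where "K = V \<inter> sphere 0 1"
  have "closed V" by (rule closed_subspace[OF V])
  hence cK: "compact K" unfolding K_def
    by (simp add: bounded_Int compact_eq_bounded_closed closed_Int)
  have ne: "K \<noteq> {}"
  proof -
    obtain x where x: "x \<in> V" "x \<noteq> 0" using nz V subspace_0 by blast
    have "(1/norm x) *\<^sub>R x \<in> V" using V x by (simp add: subspace_scale)
    moreover have "norm ((1/norm x) *\<^sub>R x) = 1" using x by simp
    ultimately show ?thesis unfolding K_def by auto
  qed
  have cont: "continuous_on K (\<lambda>x. x \<bullet> (A *v x))"
    by (intro continuous_on_inner continuous_on_id matrix_vector_mult_linear_continuous_on)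
  obtain e where eK: "e \<in> K" and emax0: "\<forall>y\<in>K. y \<bullet> (A *v y) \<le> e \<bullet> (A *v e)"
    using continuous_attains_sup[OF cK ne cont] by blast
  have emax: "\<And>y. y \<in> K \<Longrightarrow> y \<bullet> (A *v y) \<le> e \<bullet> (A *v e)" using emax0 by blast
  define l where "l = e \<bullet> (A *v e)"
  have eV: "e \<in> V" and en: "norm e = 1" using eK by (auto simp: K_def)
  have ee: "e \<bullet> e = 1" using en by (simp add: dot_square_norm)
  have key: "h \<bullet> (A *v e) = 0" if hV: "h \<in> V" and he: "h \<bullet> e = 0" for h
  proof -
    have "2*t*(h \<bullet> (A *v e)) \<le> t^2*(l*(h\<bullet>h) - h \<bullet> (A *v h))" for t
    proof -
      define z where "z = e + t *\<^sub>R h"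
      have zz: "z \<bullet> z = 1 + t^2*(h\<bullet>h)"
        using ee he by (simp add: z_def inner_add_left inner_add_right inner_commute power2_eq_square)
      have "t^2*(h\<bullet>h) \<ge> 0" by simp
      hence zpos: "z \<bullet> z > 0" using zz by linarith
      hence "z \<noteq> 0" by auto
      hence "norm z > 0" by simp
      have zV: "z \<in> V" using V eV hV by (simp add: z_def subspace_add subspace_scale)
      have "(1/norm z) *\<^sub>R z \<in> K" unfolding K_def using zV \<open>norm z > 0\<close>
        by (simp add: subspace_scale[OF V])
      hence "((1/norm z) *\<^sub>R z) \<bullet> (A *v ((1/norm z) *\<^sub>R z)) \<le> l"
        using emax l_def by blast
      hence "(z \<bullet> (A *v z)) / (norm z)^2 \<le> l"
        by (simp add: matrix_vector_mult_scaleR power2_eq_square)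
      hence "z \<bullet> (A *v z) \<le> l * (z \<bullet> z)"
        using zpos by (simp add: dot_square_norm divide_le_eq)
      moreover have "z \<bullet> (A *v z) = l + 2*t*(h \<bullet> (A *v e)) + t^2 * (h \<bullet> (A *v h))"
        using sym_dot[OF sym, of h e] inner_commute[of "A *v h" e]
        by (simp add: z_def l_def matrix_vector_right_distrib matrix_vector_mult_scaleR
            inner_add_left inner_add_right power2_eq_square algebra_simps)
      ultimately show ?thesis using zz by (simp add: algebra_simps)
    qed
    thus ?thesis using quad_zero by blast
  qed
  define h where "h = A *v e - l *\<^sub>R e"
  have hV: "h \<in> V" using V eV inv by (simp add: h_def subspace_diff subspace_scale)
  have he: "h \<bullet> e = 0" using ee inner_commute[of "A *v e" e]
    by (simp add: h_def l_def inner_diff_left)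
  have "h \<bullet> h = h \<bullet> (A *v e) - l * (h \<bullet> e)" by (simp add: h_def inner_diff_right)
  also have "\<dots> = 0" using key[OF hV he] he by simp
  finally have "h = 0" by simp
  thus ?thesis using eV en by (auto simp: h_def l_def)
qed


definition eigbasis :: "real^'n^'n \<Rightarrow> (real^'n) set \<Rightarrow> (real^'n) set \<Rightarrow> bool" where
  "eigbasis A V B \<longleftrightarrow> finite B \<and> B \<subseteq> V \<and> (\<forall>b\<in>B. norm b = 1 \<and> A *v b = (b \<bullet> (A *v b)) *\<^sub>R b)
     \<and> pairwise orthogonal B \<and> span B = V"

lemma eigbasis_exists_aux:
  fixes A :: "real^'n^'n"
  assumes sym: "transpose A = A"
  shows "\<forall>V. dim V = k \<longrightarrow> subspace V \<longrightarrow> (\<forall>x\<in>V. A *v x \<in> V) \<longrightarrow> (\<exists>B. eigbasis A V B)"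
proof (induction k rule: less_induct)
  case (less k)
  show ?case
  proof (intro allI impI)
    fix V :: "(real^'n) set"
    assume dV: "dim V = k" and V: "subspace V" and inv: "\<forall>x\<in>V. A *v x \<in> V"
    show "\<exists>B. eigbasis A V B"
    proof (cases "V = {0}")
      case True
      thus ?thesis by (rule_tac x="{}" in exI) (simp add: eigbasis_def)
    next
      case False
      obtain e where eV: "e \<in> V" and en: "norm e = 1" and eA: "A *v e = (e \<bullet> (A *v e)) *\<^sub>R e"
        using eigen_exists[OF sym V False] inv by blast
      define l where "l = e \<bullet> (A *v e)"
      have ee: "e \<bullet> e = 1" using en by (simp add: dot_square_norm)
      define V' where "V' = {x\<in>V. e \<bullet> x = 0}"
      have V'sub: "subspace V'" unfolding V'_def subspace_def
        using V by (auto simp: subspace_def inner_add_right)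
      have inv': "\<forall>x\<in>V'. A *v x \<in> V'"
      proof
        fix x assume x: "x \<in> V'"
        have "e \<bullet> (A *v x) = (A *v e) \<bullet> x" by (rule sym_dot[OF sym])
        also have "\<dots> = l * (e \<bullet> x)" using eA by (simp add: l_def[symmetric])
        also have "\<dots> = 0" using x by (simp add: V'_def)
        finally show "A *v x \<in> V'" using x inv by (simp add: V'_def)
      qed
      have "V' \<subset> V"
      proof -
        have "e \<notin> V'" using ee by (simp add: V'_def)
        moreover have "V' \<subseteq> V" by (auto simp: V'_def)
        ultimately show ?thesis using eV by blast
      qed
      moreover have s1: "span V' = V'" by (rule span_subspace[OF subset_refl span_superset V'sub])
      moreover have s2: "span V = V" by (rule span_subspace[OF subset_refl span_superset V])
      ultimately have "dim V' < dim V" using dim_psubset[of V' V] by argo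
      then obtain B' where B': "eigbasis A V' B'" using less dV V'sub inv' by blast
      define B where "B = insert e B'"
      have "eigbasis A V B"
        unfolding eigbasis_def
      proof (intro conjI)
        show "finite B" using B' by (simp add: B_def eigbasis_def)
        show "B \<subseteq> V" using B' eV by (auto simp: B_def eigbasis_def V'_def)
        show "\<forall>b\<in>B. norm b = 1 \<and> A *v b = (b \<bullet> (A *v b)) *\<^sub>R b"
          using B' en eA by (auto simp: B_def eigbasis_def)
        show "pairwise orthogonal B"
          unfolding B_def pairwise_insert
          using B' by (auto simp: eigbasis_def V'_def orthogonal_def inner_commute)
        show "span B = V"
        proof
          show "span B \<subseteq> V" using B' eV V
            by (intro span_minimal) (auto simp: B_def eigbasis_def V'_def)
          show "V \<subseteq> span B"
          proof
            fix x assume x: "x \<in> V"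
            have "x - (e \<bullet> x) *\<^sub>R e \<in> V'" using x eV V ee
              by (simp add: V'_def subspace_diff subspace_scale inner_diff_right)
            hence "x - (e \<bullet> x) *\<^sub>R e \<in> span B'" using B' by (simp add: eigbasis_def)
            hence "x - (e \<bullet> x) *\<^sub>R e \<in> span B" by (metis B_def span_mono subset_insertI subsetD)
            moreover have "(e \<bullet> x) *\<^sub>R e \<in> span B" by (simp add: B_def span_base span_mul)
            ultimately have "(x - (e \<bullet> x) *\<^sub>R e) + (e \<bullet> x) *\<^sub>R e \<in> span B" by (rule span_add)
            thus "x \<in> span B" by simp
          qed
        qed
      qed
      thus ?thesis by blast
    qed
  qed
qed

lemma eigbasis_exists:
  fixes A :: "real^'n^'n"
  assumes sym: "transpose A = A"
  shows "\<exists>B. eigbasis A UNIV B"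
  using eigbasis_exists_aux[OF sym, of "dim (UNIV::(real^'n) set)"] by simp

lemma orth_expand:
  fixes B :: "(real^'n) set"
  assumes fin: "finite B" and un: "\<forall>b\<in>B. norm b = 1" and po: "pairwise orthogonal B"
    and sp: "x \<in> span B"
  shows "x = (\<Sum>b\<in>B. (b \<bullet> x) *\<^sub>R b)"
proof -
  obtain u where u: "x = (\<Sum>v\<in>B. u v *\<^sub>R v)" using sp span_finite[OF fin] by auto
  have "b \<bullet> x = u b" if b: "b \<in> B" for b
  proof -
    have "b \<bullet> x = (\<Sum>v\<in>B. u v * (b \<bullet> v))" by (simp add: u inner_sum_right)
    also have "\<dots> = (\<Sum>v\<in>B. if v = b then u b else 0)"
    proof (rule sum.cong)
      fix v assume v: "v \<in> B"
      show "u v * (b \<bullet> v) = (if v = b then u b else 0)"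
      proof (cases "v = b")
        case True
        with un b show ?thesis by (simp add: dot_square_norm)
      next
        case False
        with po b v have "b \<bullet> v = 0" by (auto simp: pairwise_def orthogonal_def)
        with False show ?thesis by simp
      qed
    qed simp
    also have "\<dots> = u b" using b fin by simp
    finally show ?thesis .
  qed
  thus ?thesis using u by (auto intro: sum.cong)
qed


lemma mv_sum: "(M::real^'n^'m) *v (\<Sum>b\<in>B. f b) = (\<Sum>b\<in>B. M *v f b)"
  by (induction B rule: infinite_finite_induct) (auto simp: matrix_vector_right_distrib)

lemma eigen_sqrt_unique:
  fixes A T :: "real^'n^'n"
  assumes symT: "transpose T = T" and psdT: "psd T" and TT: "T ** T = A"
    and lam: "l \<ge> 0" and Ab: "A *v b = l *\<^sub>R b"
  shows "T *v b = sqrt l *\<^sub>R b"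
proof -
  define s where "s = sqrt l"
  have ss: "s * s = l" using lam by (simp add: s_def)
  have s0: "s \<ge> 0" by (simp add: s_def lam)
  define y where "y = T *v b - s *\<^sub>R b"
  have "T *v (T *v b) = A *v b" using TT by (simp add: matrix_vector_mul_assoc)
  hence Ty: "T *v y = - s *\<^sub>R y"
    using Ab ss by (simp add: y_def matrix_vector_mult_diff_distrib matrix_vector_mult_scaleR algebra_simps)
  have "0 \<le> y \<bullet> (T *v y)" using psdT by (simp add: psd_def)
  hence yy: "s * (y \<bullet> y) \<le> 0" using Ty by simp
  have "y = 0"
  proof (cases "s = 0")
    case True
    hence "T *v y = 0" using Ty by simp
    moreover have "y = T *v b" using True by (simp add: y_def)
    ultimately have "y \<bullet> y = b \<bullet> (T *v y)" using sym_dot[OF symT, of b y] by simp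
    thus "y = 0" using \<open>T *v y = 0\<close> by simp
  next
    case False
    hence "s > 0" using s0 by simp
    hence "y \<bullet> y \<le> 0" using yy by (simp add: mult_le_0_iff)
    thus "y = 0" by (metis antisym inner_ge_zero inner_eq_zero_iff)
  qed
  thus ?thesis by (simp add: y_def s_def)
qed

lemma msqrt_props:
  fixes A :: "real^'n^'n"
  assumes sym: "transpose A = A" and psdA: "psd A"
  shows "transpose (msqrt A) = msqrt A \<and> psd (msqrt A) \<and> msqrt A ** msqrt A = A"
proof -
  obtain B where B: "eigbasis A UNIV B" using eigbasis_exists[OF sym] by blast
  have fin: "finite B" and un: "\<forall>b\<in>B. norm b = 1" and po: "pairwise orthogonal B"
    and eig: "\<And>b. b \<in> B \<Longrightarrow> A *v b = (b \<bullet> (A *v b)) *\<^sub>R b" and sp: "span B = UNIV"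
    using B by (auto simp: eigbasis_def)
  define lam where "lam b = b \<bullet> (A *v b)" for b
  have eigl: "A *v b = lam b *\<^sub>R b" if "b \<in> B" for b using eig[OF that] unfolding lam_def .
  have lam0: "lam b \<ge> 0" for b using psdA by (simp add: psd_def lam_def)
  have expand: "x = (\<Sum>b\<in>B. (b \<bullet> x) *\<^sub>R b)" for x
    using orth_expand[OF fin un po] sp by simp
  have ortho: "b \<bullet> b' = (if b' = b then 1 else 0)" if "b \<in> B" "b' \<in> B" for b b'
    using that un po by (auto simp: pairwise_def orthogonal_def dot_square_norm)
  define S :: "real^'n^'n" where "S = (\<chi> i j. \<Sum>b\<in>B. sqrt (lam b) * b$i * b$j)"
  have Sv: "S *v x = (\<Sum>b\<in>B. (sqrt (lam b) * (b \<bullet> x)) *\<^sub>R b)" for x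
    by (simp add: vec_eq_iff S_def matrix_vector_mult_def inner_vec_def sum_distrib_left
        sum_distrib_right sum_component mult_ac) (subst sum.swap, simp add: mult_ac)
  have bS: "b \<bullet> (S *v x) = sqrt (lam b) * (b \<bullet> x)" if b: "b \<in> B" for b x
  proof -
    have "b \<bullet> (S *v x) = (\<Sum>b'\<in>B. sqrt (lam b') * (b' \<bullet> x) * (b \<bullet> b'))"
      by (simp add: Sv inner_sum_right)
    also have "\<dots> = (\<Sum>b'\<in>B. if b' = b then sqrt (lam b) * (b \<bullet> x) else 0)"
      by (rule sum.cong) (auto simp: ortho[OF b])
    also have "\<dots> = sqrt (lam b) * (b \<bullet> x)" using b fin by simp
    finally show ?thesis .
  qed
  have symS: "transpose S = S" by (simp add: S_def transpose_def vec_eq_iff mult_ac)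
  have psdS: "psd S"
    unfolding psd_def
  proof
    fix x
    have "x \<bullet> (S *v x) = (\<Sum>b\<in>B. sqrt (lam b) * ((b \<bullet> x) * (b \<bullet> x)))"
      by (simp add: Sv inner_sum_right inner_commute mult_ac)
    also have "\<dots> \<ge> 0" by (rule sum_nonneg, rule mult_nonneg_nonneg) (simp_all add: lam0)
    finally show "0 \<le> x \<bullet> (S *v x)" .
  qed
  have SS: "S ** S = A"
    unfolding matrix_eq
  proof
    fix x
    have "(S ** S) *v x = S *v (S *v x)" by (simp add: matrix_vector_mul_assoc)
    also have "\<dots> = (\<Sum>b\<in>B. (lam b * (b \<bullet> x)) *\<^sub>R b)"
      unfolding Sv[of "S *v x"]
      by (rule sum.cong) (auto simp: bS lam0 mult.assoc[symmetric])
    also have "\<dots> = (\<Sum>b\<in>B. (b \<bullet> x) *\<^sub>R (A *v b))"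
      by (rule sum.cong) (auto simp: eigl)
    also have "\<dots> = A *v (\<Sum>b\<in>B. (b \<bullet> x) *\<^sub>R b)"
      by (simp add: mv_sum matrix_vector_mult_scaleR)
    also have "\<dots> = A *v x" using expand[of x] by simp
    finally show "(S ** S) *v x = A *v x" .
  qed
  have uniq: "T = S" if symT: "transpose T = T" and psdT: "psd T" and TT: "T ** T = A" for T
    unfolding matrix_eq
  proof
    fix x
    have Tb: "T *v b = sqrt (lam b) *\<^sub>R b" if "b \<in> B" for b
      by (rule eigen_sqrt_unique[OF symT psdT TT lam0 eigl[OF that]])
    have "T *v x = T *v (\<Sum>b\<in>B. (b \<bullet> x) *\<^sub>R b)" using expand[of x] by simp
    also have "\<dots> = (\<Sum>b\<in>B. (b \<bullet> x) *\<^sub>R (T *v b))" by (simp add: mv_sum matrix_vector_mult_scaleR)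
    also have "\<dots> = (\<Sum>b\<in>B. (sqrt (lam b) * (b \<bullet> x)) *\<^sub>R b)"
      by (rule sum.cong) (auto simp: Tb)
    also have "\<dots> = S *v x" by (simp add: Sv)
    finally show "T *v x = S *v x" .
  qed
  have "msqrt A = S"
    unfolding msqrt_def
  proof (rule the_equality)
    show "transpose S = S \<and> psd S \<and> S ** S = A" using symS psdS SS by blast
    show "\<And>T. transpose T = T \<and> psd T \<and> T ** T = A \<Longrightarrow> T = S" using uniq by blast
  qed
  thus ?thesis using symS psdS SS by simp
qed


lemma line_deriv:
  fixes h :: "'a::real_inner \<Rightarrow> real"
  assumes dh: "\<And>z. (h has_derivative (\<lambda>k. G z \<bullet> k)) (at z)"
  shows "((\<lambda>t. h (x + t *\<^sub>R d)) has_real_derivative (G (x + t *\<^sub>R d) \<bullet> d)) (at t)"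
proof -
  have l: "((\<lambda>t. x + t *\<^sub>R d) has_derivative (\<lambda>s. s *\<^sub>R d)) (at t)"
    by (auto intro!: derivative_eq_intros)
  have "((\<lambda>t. h (x + t *\<^sub>R d)) has_derivative (\<lambda>s. G (x + t *\<^sub>R d) \<bullet> (s *\<^sub>R d))) (at t)"
    using has_derivative_compose[OF l dh] .
  moreover have "(\<lambda>s. G (x + t *\<^sub>R d) \<bullet> (s *\<^sub>R d)) = (*) (G (x + t *\<^sub>R d) \<bullet> d)"
    by (auto simp: mult.commute)
  ultimately show ?thesis by (simp add: has_field_derivative_def)
qed

lemma normsq_line: "(norm (x + t *\<^sub>R d))\<^sup>2 = (norm x)\<^sup>2 + 2*t*(x \<bullet> d) + t^2 * (norm d)\<^sup>2"
  for x d :: "'a::real_inner"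
  by (simp only: power2_norm_eq_inner) (simp add: inner_add_left inner_add_right inner_commute power2_eq_square algebra_simps)

lemma F1:
  fixes h :: "'a::real_inner \<Rightarrow> real"
  assumes dh: "\<And>z. (h has_derivative (\<lambda>k. G z \<bullet> k)) (at z)"
    and sc: "mu_strongly_convex \<mu> h"
  shows "h x + G x \<bullet> (y - x) + \<mu>/2 * (norm (y - x))\<^sup>2 \<le> h y"
proof -
  define d where "d = y - x"
  define k where "k z = h z - (\<mu>/2) * (norm z)\<^sup>2" for z
  have ck: "convex_on UNIV k" using sc unfolding mu_strongly_convex_def by (simp add: k_def[abs_def])
  define \<phi> where "\<phi> t = k (x + t *\<^sub>R d)" for t
  have cphi: "convex_on UNIV \<phi>"
  proof (rule convex_onI)
    fix t a b :: real assume t: "0 < t" "t < 1"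
    have "\<phi> ((1 - t) *\<^sub>R a + t *\<^sub>R b) = k ((1 - t) *\<^sub>R (x + a *\<^sub>R d) + t *\<^sub>R (x + b *\<^sub>R d))"
      by (simp add: \<phi>_def algebra_simps)
    also have "\<dots> \<le> (1 - t) * k (x + a *\<^sub>R d) + t * k (x + b *\<^sub>R d)"
      using convex_onD[OF ck] t by simp
    finally show "\<phi> ((1 - t) *\<^sub>R a + t *\<^sub>R b) \<le> (1 - t) * \<phi> a + t * \<phi> b" by (simp add: \<phi>_def)
  qed simp
  have phi_eq: "\<phi> t = h (x + t *\<^sub>R d) - (\<mu>/2) * ((norm x)\<^sup>2 + 2*t*(x \<bullet> d) + t^2 * (norm d)\<^sup>2)" for t
    by (simp add: \<phi>_def k_def normsq_line)
  have "((\<lambda>t. h (x + t *\<^sub>R d) - (\<mu>/2) * ((norm x)\<^sup>2 + 2*t*(x \<bullet> d) + t^2 * (norm d)\<^sup>2))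
         has_real_derivative (G (x + 0 *\<^sub>R d) \<bullet> d - (\<mu>/2) * (0 + 2*(x \<bullet> d) + 2 * 0 * (norm d)\<^sup>2))) (at 0)"
    using line_deriv[OF dh, of x d 0] by (auto intro!: derivative_eq_intros)
  hence der: "(\<phi> has_real_derivative (G x \<bullet> d - \<mu> * (x \<bullet> d))) (at 0 within UNIV)"
    unfolding phi_eq[abs_def] by simp
  have "\<phi> 1 - \<phi> 0 \<ge> (G x \<bullet> d - \<mu> * (x \<bullet> d)) * (1 - 0)"
    by (rule convex_on_imp_above_tangent[OF cphi]) (use der in auto)
  moreover have "d + x = y" by (simp add: d_def)
  ultimately show ?thesis
    by (simp add: phi_eq d_def[symmetric] power2_eq_square algebra_simps)
qed

lemma F2:
  fixes h :: "'a::real_inner \<Rightarrow> real"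
  assumes dh: "\<And>z. (h has_derivative (\<lambda>k. G z \<bullet> k)) (at z)"
    and lip: "L-lipschitz_on UNIV G"
  shows "h y \<le> h x + G x \<bullet> (y - x) + L/2 * (norm (y - x))\<^sup>2"
proof -
  define d where "d = y - x"
  define \<theta> where "\<theta> t = h (x + t *\<^sub>R d) - t * (G x \<bullet> d) - (L/2) * t^2 * (norm d)\<^sup>2" for t
  have "\<theta> 1 \<le> \<theta> 0"
  proof (rule DERIV_nonpos_imp_nonincreasing[of 0 1 \<theta>])
    fix t :: real assume t: "0 \<le> t" "t \<le> 1"
    have "(\<theta> has_real_derivative (G (x + t *\<^sub>R d) \<bullet> d - 1 * (G x \<bullet> d) - (L/2) * (2 * t) * (norm d)\<^sup>2)) (at t)"
      unfolding \<theta>_def[abs_def]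
      using line_deriv[OF dh, of x d t] by (auto intro!: derivative_eq_intros)
    moreover have "G (x + t *\<^sub>R d) \<bullet> d - 1 * (G x \<bullet> d) - (L/2) * (2 * t) * (norm d)\<^sup>2 \<le> 0"
    proof -
      have "G (x + t *\<^sub>R d) \<bullet> d - G x \<bullet> d = (G (x + t *\<^sub>R d) - G x) \<bullet> d" by (simp add: inner_diff_left)
      also have "\<dots> \<le> norm (G (x + t *\<^sub>R d) - G x) * norm d" by (rule norm_cauchy_schwarz)
      also have "norm (G (x + t *\<^sub>R d) - G x) \<le> L * norm (t *\<^sub>R d)"
        using lipschitz_onD[OF lip, of "x + t *\<^sub>R d" x] by (simp add: dist_norm)
      hence "norm (G (x + t *\<^sub>R d) - G x) * norm d \<le> L * norm (t *\<^sub>R d) * norm d"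
        by (simp add: mult_right_mono)
      also have "\<dots> = L * t * (norm d)\<^sup>2" using t by (simp add: power2_eq_square)
      finally show ?thesis by simp
    qed
    ultimately show "\<exists>y. (\<theta> has_real_derivative y) (at t) \<and> y \<le> 0" by blast
  qed simp
  thus ?thesis by (simp add: \<theta>_def d_def)
qed

lemma F4:
  fixes h :: "'a::real_inner \<Rightarrow> real"
  assumes dh: "\<And>z. (h has_derivative (\<lambda>k. G z \<bullet> k)) (at z)"
    and sc: "mu_strongly_convex \<mu> h" and mu: "\<mu> \<ge> 0"
    and lip: "L-lipschitz_on UNIV G" and L: "L > 0"
  shows "(norm (G y - G x))\<^sup>2 \<le> 2 * L * (h y - h x - G x \<bullet> (y - x))"
proof -
  define \<delta> where "\<delta> = G y - G x"
  define z where "z = y - (1/L) *\<^sub>R \<delta>"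
  have a: "h x + G x \<bullet> (z - x) \<le> h z"
  proof -
    have "0 \<le> \<mu>/2 * (norm (z - x))\<^sup>2" using mu by simp
    thus ?thesis using F1[OF dh sc, of x z] by linarith
  qed
  have b: "h z \<le> h y + G y \<bullet> (z - y) + L/2 * (norm (z - y))\<^sup>2" by (rule F2[OF dh lip])
  have zx: "z - x = (y - x) - (1/L) *\<^sub>R \<delta>" by (simp add: z_def)
  have zy: "z - y = - (1/L) *\<^sub>R \<delta>" by (simp add: z_def)
  have "h x + G x \<bullet> (y - x) - (1/L) * (G x \<bullet> \<delta>) \<le> h y - (1/L) * (G y \<bullet> \<delta>) + (1/(2*L)) * (\<delta> \<bullet> \<delta>)"
  proof -
    have a': "h x + G x \<bullet> (y - x) - (1/L) * (G x \<bullet> \<delta>) \<le> h z"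
      using a by (simp add: zx inner_diff_right)
    have "(norm (z - y))\<^sup>2 = (1/L)^2 * (\<delta> \<bullet> \<delta>)"
      using L by (simp add: zy power_divide dot_square_norm field_simps)
    hence b': "h z \<le> h y - (1/L) * (G y \<bullet> \<delta>) + (1/(2*L)) * (\<delta> \<bullet> \<delta>)"
      using b L by (simp add: zy power2_eq_square)
    show ?thesis using a' b' by linarith
  qed
  moreover have "G y \<bullet> \<delta> - G x \<bullet> \<delta> = \<delta> \<bullet> \<delta>" by (simp add: \<delta>_def inner_diff_left)
  hence "(1/L) * (G y \<bullet> \<delta>) - (1/L) * (G x \<bullet> \<delta>) = (1/L) * (\<delta> \<bullet> \<delta>)"
    by (metis right_diff_distrib)
  moreover have "(1/L) * (\<delta> \<bullet> \<delta>) - (1/(2*L)) * (\<delta> \<bullet> \<delta>) = (1/(2*L)) * (\<delta> \<bullet> \<delta>)"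
    by (simp add: field_simps)
  ultimately have "(1/(2*L)) * (\<delta> \<bullet> \<delta>) \<le> h y - h x - G x \<bullet> (y - x)"
    by linarith
  thus ?thesis using L by (simp add: \<delta>_def power2_norm_eq_inner field_simps)
qed


lemma var_bound:
  fixes Z :: "nat \<Rightarrow> 'a::real_inner"
  shows "(\<Sum>i<q. (norm (Z i - (1/real q) *\<^sub>R (\<Sum>j<q. Z j)))\<^sup>2) \<le> (\<Sum>i<q. (norm (Z i))\<^sup>2)"
proof (cases "q = 0")
  case True thus ?thesis by simp
next
  case False
  define m where "m = (1/real q) *\<^sub>R (\<Sum>j<q. Z j)"
  have sm: "(\<Sum>j<q. Z j) = real q *\<^sub>R m" using False by (simp add: m_def)
  have "(\<Sum>i<q. (norm (Z i - m))\<^sup>2) = (\<Sum>i<q. (norm (Z i))\<^sup>2 - 2 * (Z i \<bullet> m) + (norm m)\<^sup>2)"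
    by (rule sum.cong) (simp_all add: power2_norm_eq_inner inner_diff_left inner_diff_right inner_commute)
  also have "\<dots> = (\<Sum>i<q. (norm (Z i))\<^sup>2) - 2 * ((\<Sum>i<q. Z i) \<bullet> m) + real q * (norm m)\<^sup>2"
    by (simp add: sum.distrib sum_subtractf sum_distrib_left inner_sum_left)
  also have "\<dots> = (\<Sum>i<q. (norm (Z i))\<^sup>2) - real q * (norm m)\<^sup>2"
    by (simp add: sm power2_norm_eq_inner)
  also have "\<dots> \<le> (\<Sum>i<q. (norm (Z i))\<^sup>2)" by simp
  finally show ?thesis by (simp add: m_def)
qed

lemma norm_diff_sq_le: "(norm (a - b))\<^sup>2 \<le> 2 * (norm a)\<^sup>2 + 2 * (norm b)\<^sup>2" for a b :: "'a::real_inner"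
proof -
  have "(norm (a - b))\<^sup>2 + (norm (a + b))\<^sup>2 = 2 * (norm a)\<^sup>2 + 2 * (norm b)\<^sup>2"
    by (simp add: power2_norm_eq_inner inner_diff_left inner_diff_right inner_add_left inner_add_right inner_commute)
  moreover have "0 \<le> (norm (a + b))\<^sup>2" by simp
  ultimately show ?thesis by linarith
qed

locale node =
  fixes f :: "nat \<Rightarrow> 'a::real_inner \<Rightarrow> real" and g :: "nat \<Rightarrow> 'a \<Rightarrow> 'a" and q :: nat and \<mu> L :: real
  assumes grad: "\<And>i x. i < q \<Longrightarrow> (f i has_derivative (\<lambda>h. g i x \<bullet> h)) (at x)"
    and sconv: "\<And>i. i < q \<Longrightarrow> mu_strongly_convex \<mu> (f i)"
    and lips: "\<And>i. i < q \<Longrightarrow> L-lipschitz_on UNIV (g i)"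
    and mu_pos: "0 < \<mu>" and L_pos: "0 < L"
begin

definition Dg where "Dg i z xs = f i z - f i xs - g i xs \<bullet> (z - xs)"

lemma Dg_nonneg: "i < q \<Longrightarrow> 0 \<le> Dg i z xs"
proof -
  assume i: "i < q"
  have "0 \<le> \<mu>/2 * (norm (z - xs))\<^sup>2" using mu_pos by simp
  thus ?thesis using F1[OF grad sconv, OF i i, of xs z] unfolding Dg_def by linarith
qed

lemma mono_bound: "i < q \<Longrightarrow> (2*\<mu>/L) * Dg i z xs \<le> (z - xs) \<bullet> (g i z - g i xs)"
proof -
  assume i: "i < q"
  have a: "f i xs + g i xs \<bullet> (z - xs) + \<mu>/2 * (norm (z - xs))\<^sup>2 \<le> f i z" by (rule F1[OF grad sconv, OF i i])
  have b: "f i z + g i z \<bullet> (xs - z) + \<mu>/2 * (norm (xs - z))\<^sup>2 \<le> f i xs" by (rule F1[OF grad sconv, OF i i])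
  have c: "Dg i z xs \<le> L/2 * (norm (z - xs))\<^sup>2"
    using F2[OF grad lips, OF i i, of z xs] by (simp add: Dg_def)
  have nz: "norm (xs - z) = norm (z - xs)" by (rule norm_minus_commute)
  have "\<mu> * (norm (z - xs))\<^sup>2 \<le> (z - xs) \<bullet> (g i z - g i xs)"
    using a b nz by (simp add: inner_diff_left inner_diff_right inner_commute algebra_simps)
  moreover have "(2*\<mu>/L) * Dg i z xs \<le> (2*\<mu>/L) * (L/2 * (norm (z - xs))\<^sup>2)"
    using c mu_pos L_pos by (intro mult_left_mono) auto
  moreover have "(2*\<mu>/L) * (L/2 * (norm (z - xs))\<^sup>2) = \<mu> * (norm (z - xs))\<^sup>2" using L_pos by simp
  ultimately show ?thesis by linarith
qed

lemma coco: "i < q \<Longrightarrow> (norm (g i z - g i xs))\<^sup>2 \<le> 2 * L * Dg i z xs"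
  unfolding Dg_def using mu_pos by (intro F4[OF grad sconv _ lips L_pos]) auto

lemma LmuD: "i < q \<Longrightarrow> 0 \<le> (L - \<mu>) * Dg i z xs"
proof -
  assume i: "i < q"
  show ?thesis
  proof (cases "z = xs")
    case True thus ?thesis by (simp add: Dg_def)
  next
    case False
    have a: "f i xs + g i xs \<bullet> (z - xs) + \<mu>/2 * (norm (z - xs))\<^sup>2 \<le> f i z" by (rule F1[OF grad sconv, OF i i])
    have b: "f i z + g i z \<bullet> (xs - z) + \<mu>/2 * (norm (xs - z))\<^sup>2 \<le> f i xs" by (rule F1[OF grad sconv, OF i i])
    have nz: "norm (xs - z) = norm (z - xs)" by (rule norm_minus_commute)
    have "\<mu> * (norm (z - xs))\<^sup>2 \<le> (z - xs) \<bullet> (g i z - g i xs)"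
      using a b nz by (simp add: inner_diff_left inner_diff_right inner_commute algebra_simps)
    also have "\<dots> \<le> norm (z - xs) * norm (g i z - g i xs)" by (rule norm_cauchy_schwarz)
    also have "\<dots> \<le> norm (z - xs) * (L * norm (z - xs))"
      using lipschitz_onD[OF lips[OF i], of z xs] by (intro mult_left_mono) (auto simp: dist_norm)
    finally have "\<mu> * (norm (z - xs))\<^sup>2 \<le> L * (norm (z - xs))\<^sup>2" by (simp add: power2_eq_square mult_ac)
    moreover have "(norm (z - xs))\<^sup>2 > 0" using False by simp
    ultimately have "\<mu> \<le> L" by simp
    thus ?thesis using Dg_nonneg[OF i] by simp
  qed
qed

lemma node_N1:
  assumes q: "q > 0"
  shows "(2*\<mu>/L) * ((1/real q) * (\<Sum>i<q. Dg i x xs))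
     \<le> (1/real q) * (\<Sum>i<q. (x - xs) \<bullet> (g i x - g i (y i) + (1/real q) *\<^sub>R (\<Sum>j<q. g j (y j))
                                   - (1/real q) *\<^sub>R (\<Sum>j<q. g j xs)))"
proof -
  have c1: "(\<Sum>i<q. (1/real q) *\<^sub>R S) = S" for S :: 'a
    using q by (simp add: sum_constant_scaleR)
  have "(\<Sum>i<q. (g i x - g i (y i) + (1/real q) *\<^sub>R (\<Sum>j<q. g j (y j)) - (1/real q) *\<^sub>R (\<Sum>j<q. g j xs)))
      = (\<Sum>i<q. g i x) - (\<Sum>i<q. g i (y i)) + (\<Sum>j<q. g j (y j)) - (\<Sum>j<q. g j xs)"
    by (simp only: sum.distrib sum_subtractf c1)
  also have "\<dots> = (\<Sum>i<q. g i x - g i xs)" by (simp add: sum_subtractf)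
  finally have se: "(\<Sum>i<q. (g i x - g i (y i) + (1/real q) *\<^sub>R (\<Sum>j<q. g j (y j)) - (1/real q) *\<^sub>R (\<Sum>j<q. g j xs)))
      = (\<Sum>i<q. g i x - g i xs)" .
  have "(\<Sum>i<q. (x - xs) \<bullet> (g i x - g i (y i) + (1/real q) *\<^sub>R (\<Sum>j<q. g j (y j)) - (1/real q) *\<^sub>R (\<Sum>j<q. g j xs)))
      = (x - xs) \<bullet> (\<Sum>i<q. g i x - g i xs)"
    by (simp only: inner_sum_right[symmetric] se)
  also have "\<dots> = (\<Sum>i<q. (x - xs) \<bullet> (g i x - g i xs))" by (simp add: inner_sum_right)
  also have "\<dots> \<ge> (\<Sum>i<q. (2*\<mu>/L) * Dg i x xs)" by (rule sum_mono) (use mono_bound in force)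
  finally have "(\<Sum>i<q. (2*\<mu>/L) * Dg i x xs) \<le> (\<Sum>i<q. (x - xs) \<bullet> (g i x - g i (y i) + (1/real q) *\<^sub>R (\<Sum>j<q. g j (y j))
                                   - (1/real q) *\<^sub>R (\<Sum>j<q. g j xs)))" .
  hence "(1/real q) * (\<Sum>i<q. (2*\<mu>/L) * Dg i x xs) \<le> (1/real q) * (\<Sum>i<q. (x - xs) \<bullet> (g i x - g i (y i) + (1/real q) *\<^sub>R (\<Sum>j<q. g j (y j))
                                   - (1/real q) *\<^sub>R (\<Sum>j<q. g j xs)))"
    by (intro mult_left_mono) auto
  thus ?thesis by (simp add: sum_distrib_left mult_ac)
qed

lemma node_N2:
  shows "(1/real q) * (\<Sum>i<q. (norm (g i x - g i (y i) + (1/real q) *\<^sub>R (\<Sum>j<q. g j (y j))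
                                   - (1/real q) *\<^sub>R (\<Sum>j<q. g j xs)))\<^sup>2)
     \<le> 4 * L * ((1/real q) * (\<Sum>i<q. Dg i x xs)) + 4 * L * ((1/real q) * (\<Sum>i<q. Dg i (y i) xs))"
proof -
  define A where "A i = g i x - g i xs" for i
  define Z where "Z i = g i (y i) - g i xs" for i
  have eq: "g i x - g i (y i) + (1/real q) *\<^sub>R (\<Sum>j<q. g j (y j)) - (1/real q) *\<^sub>R (\<Sum>j<q. g j xs)
      = A i - (Z i - (1/real q) *\<^sub>R (\<Sum>j<q. Z j))" for i
    by (simp add: A_def Z_def sum_subtractf scaleR_diff_right algebra_simps)
  have "(\<Sum>i<q. (norm (A i - (Z i - (1/real q) *\<^sub>R (\<Sum>j<q. Z j))))\<^sup>2)
      \<le> (\<Sum>i<q. 2 * (norm (A i))\<^sup>2 + 2 * (norm (Z i - (1/real q) *\<^sub>R (\<Sum>j<q. Z j)))\<^sup>2)"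
    by (rule sum_mono) (rule norm_diff_sq_le)
  also have "\<dots> = 2 * (\<Sum>i<q. (norm (A i))\<^sup>2) + 2 * (\<Sum>i<q. (norm (Z i - (1/real q) *\<^sub>R (\<Sum>j<q. Z j)))\<^sup>2)"
    by (simp add: sum.distrib sum_distrib_left)
  also have "\<dots> \<le> 2 * (\<Sum>i<q. (norm (A i))\<^sup>2) + 2 * (\<Sum>i<q. (norm (Z i))\<^sup>2)"
    using var_bound[of Z q] by simp
  also have "\<dots> \<le> 2 * (\<Sum>i<q. 2 * L * Dg i x xs) + 2 * (\<Sum>i<q. 2 * L * Dg i (y i) xs)"
    by (intro add_mono mult_left_mono sum_mono) (auto simp: A_def Z_def coco)
  finally have "(\<Sum>i<q. (norm (A i - (Z i - (1/real q) *\<^sub>R (\<Sum>j<q. Z j))))\<^sup>2)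
      \<le> 4 * L * (\<Sum>i<q. Dg i x xs) + 4 * L * (\<Sum>i<q. Dg i (y i) xs)"
    by (simp add: sum_distrib_left mult_ac)
  hence "(1/real q) * (\<Sum>i<q. (norm (A i - (Z i - (1/real q) *\<^sub>R (\<Sum>j<q. Z j))))\<^sup>2)
      \<le> (1/real q) * (4 * L * (\<Sum>i<q. Dg i x xs) + 4 * L * (\<Sum>i<q. Dg i (y i) xs))"
    by (intro mult_left_mono) auto
  moreover have "(1/real q) * (4 * L * (\<Sum>i<q. Dg i x xs) + 4 * L * (\<Sum>i<q. Dg i (y i) xs))
     = 4 * L * ((1/real q) * (\<Sum>i<q. Dg i x xs)) + 4 * L * ((1/real q) * (\<Sum>i<q. Dg i (y i) xs))"
    by (simp add: algebra_simps)
  ultimately show ?thesis unfolding eq by linarith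
qed

lemma node_N3:
  shows "0 \<le> (1/real q) * (\<Sum>i<q. Dg i z xs)" and "0 \<le> (1/real q) * (\<Sum>i<q. Dg i (y i) xs)"
    and "0 \<le> (L - \<mu>) * ((1/real q) * (\<Sum>i<q. Dg i z xs))"
proof -
  show "0 \<le> (1/real q) * (\<Sum>i<q. Dg i z xs)" by (intro mult_nonneg_nonneg sum_nonneg) (auto simp: Dg_nonneg)
  show "0 \<le> (1/real q) * (\<Sum>i<q. Dg i (y i) xs)" by (intro mult_nonneg_nonneg sum_nonneg) (auto simp: Dg_nonneg)
  have "0 \<le> (\<Sum>i<q. (L - \<mu>) * Dg i z xs)" by (intro sum_nonneg) (auto simp: LmuD)
  hence "0 \<le> (1/real q) * (\<Sum>i<q. (L - \<mu>) * Dg i z xs)" by simp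
  thus "0 \<le> (L - \<mu>) * ((1/real q) * (\<Sum>i<q. Dg i z xs))" by (simp add: sum_distrib_left mult_ac)
qed

end


lemma mm_row: "((A::real^'n^'n) ** (x::real^'p^'n))$n = (\<Sum>m\<in>UNIV. A$n$m *\<^sub>R x$m)"
  by (simp add: matrix_matrix_mult_def vec_eq_iff sum_component)

lemma qf_eq: "qf A x = x \<bullet> (A ** x)"
  by (subst inner_vec_def) (simp add: qf_def mm_row inner_sum_right)

lemma sym_stack:
  fixes A :: "real^'n^'n" and x y :: "real^'p^'n"
  assumes "transpose A = A"
  shows "x \<bullet> (A ** y) = (A ** x) \<bullet> y"
proof -
  have s: "A$n$m = A$m$n" for n m using assms by (metis transpose_def vec_lambda_beta)
  have "x \<bullet> (A ** y) = (\<Sum>n\<in>UNIV. \<Sum>m\<in>UNIV. A$n$m * (x$n \<bullet> y$m))"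
    by (subst inner_vec_def) (simp add: mm_row inner_sum_right)
  also have "\<dots> = (\<Sum>m\<in>UNIV. \<Sum>n\<in>UNIV. A$n$m * (x$n \<bullet> y$m))" by (rule sum.swap)
  also have "\<dots> = (A ** x) \<bullet> y"
    by (subst inner_vec_def) (simp add: mm_row inner_sum_left s)
  finally show ?thesis .
qed

lemma cons_zero:
  fixes A :: "real^'n^'n"
  assumes "A *v ones = 0"
  shows "A ** ((\<chi> n. xs)::real^'p^'n) = 0"
proof -
  have "(\<Sum>m\<in>UNIV. A$n$m) = 0" for n
    using assms by (simp add: vec_eq_iff matrix_vector_mult_def ones_def)
  thus ?thesis by (simp add: vec_eq_iff mm_row scaleR_sum_left[symmetric])
qed

lemma mm_diff_l: "((A::real^'n^'n) - B) ** (x::real^'p^'n) = A ** x - B ** x"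
  by (simp add: vec_eq_iff mm_row scaleR_diff_left sum_subtractf)
lemma mm_add_l: "((A::real^'n^'n) + B) ** (x::real^'p^'n) = A ** x + B ** x"
  by (simp add: vec_eq_iff mm_row scaleR_add_left sum.distrib)
lemma mm_scale_l: "((c::real) *\<^sub>R (A::real^'n^'n)) ** (x::real^'p^'n) = c *\<^sub>R (A ** x)"
  by (simp add: vec_eq_iff mm_row scaleR_sum_right)
lemma mm_diff_r: "(A::real^'n^'n) ** ((x::real^'p^'n) - y) = A ** x - A ** y"
  by (simp add: vec_eq_iff mm_row scaleR_diff_right sum_subtractf)
lemma mm_add_r: "(A::real^'n^'n) ** ((x::real^'p^'n) + y) = A ** x + A ** y"
  by (simp add: vec_eq_iff mm_row scaleR_add_right sum.distrib)
lemma mm_scale_r: "(A::real^'n^'n) ** ((c::real) *\<^sub>R (x::real^'p^'n)) = c *\<^sub>R (A ** x)"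
  by (simp add: vec_eq_iff mm_row scaleR_sum_right mult_ac)
lemma mm_id: "mat 1 ** (x::real^'p^'n) = x" by simp
lemma mm_assoc: "(A::real^'n^'n) ** ((B::real^'n^'n) ** (x::real^'p^'n)) = (A ** B) ** x"
  by (rule matrix_mul_assoc)
lemma mm_sum_r: "(A::real^'n^'n) ** (\<Sum>s\<in>S. (X s::real^'p^'n)) = (\<Sum>s\<in>S. A ** X s)"
  by (induction S rule: infinite_finite_induct) (auto simp: mm_add_r)

lemma qf_diff: "qf ((A::real^'n^'n) - B) (x::real^'p^'n) = qf A x - qf B x"
  by (simp add: qf_eq mm_diff_l inner_diff_right)
lemma qf_scale_id: "qf ((c::real) *\<^sub>R mat 1 :: real^'n^'n) (x::real^'p^'n) = c * (norm x)\<^sup>2"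
  by (simp add: qf_eq mm_scale_l power2_norm_eq_inner)

lemma dsa_dep:
  "(\<forall>s<T. om s = om' s) \<Longrightarrow> dsa W Wt \<alpha> g q x0 om T = dsa W Wt \<alpha> g q x0 om' T"
proof (induction T rule: less_induct)
  case (less T)
  consider "T = 0" | "T = Suc 0" | t where "T = Suc (Suc t)" by (metis not0_implies_Suc)
  thus ?case
  proof cases
    case 1 thus ?thesis by simp
  next
    case 2 thus ?thesis using less.prems by (simp add: Let_def)
  next
    case 3
    have e1: "dsa W Wt \<alpha> g q x0 om (Suc t) = dsa W Wt \<alpha> g q x0 om' (Suc t)"
      using less 3 by simp
    have e2: "dsa W Wt \<alpha> g q x0 om t = dsa W Wt \<alpha> g q x0 om' t"
      using less 3 by simp
    have "om (Suc t) = om' (Suc t)" "om t = om' t" using less.prems 3 by auto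
    thus ?thesis using 3 e1 e2 by (simp add: Let_def)
  qed
qed

lemma dsa_rec:
  fixes U :: "real^'n^'n"
  assumes UU: "U ** U = Wt - W"
  shows "fst (dsa W Wt \<alpha> g q x0 om (Suc t)) = Wt ** fst (dsa W Wt \<alpha> g q x0 om t)
     - U ** (\<Sum>s\<le>t. U ** fst (dsa W Wt \<alpha> g q x0 om s))
     - \<alpha> *\<^sub>R ghat g q (om t) (fst (dsa W Wt \<alpha> g q x0 om t)) (snd (dsa W Wt \<alpha> g q x0 om t))"
    (is "?X (Suc t) = _")
proof -
  define X where "X s = fst (dsa W Wt \<alpha> g q x0 om s)" for s
  define Y where "Y s = snd (dsa W Wt \<alpha> g q x0 om s)" for s
  have "X (Suc t) = Wt ** X t - U ** (\<Sum>s\<le>t. U ** X s) - \<alpha> *\<^sub>R ghat g q (om t) (X t) (Y t)"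
proof (induction t)
  case 0
  have "X (Suc 0) = W ** x0 - \<alpha> *\<^sub>R ghat g q (om 0) (X 0) (Y 0)"
    by (simp add: X_def Y_def Let_def)
  moreover have "U ** (U ** x0) = Wt ** x0 - W ** x0" by (simp add: mm_assoc UU mm_diff_l)
  ultimately show ?case by (simp add: X_def)
next
  case (Suc t)
  define G where "G s = ghat g q (om s) (X s) (Y s)" for s
  define V where "V s = (\<Sum>r\<le>s. U ** X r)" for s
  have ih: "X (Suc t) = Wt ** X t - U ** V t - \<alpha> *\<^sub>R G t" using Suc by (simp add: G_def V_def)
  have step: "X (Suc (Suc t)) = (mat 1 + W) ** X (Suc t) - Wt ** X t - \<alpha> *\<^sub>R (G (Suc t) - G t)"
    by (simp add: X_def Y_def G_def Let_def)
  have V: "V (Suc t) = V t + U ** X (Suc t)" by (simp add: V_def)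
  have UUX: "U ** (U ** X (Suc t)) = Wt ** X (Suc t) - W ** X (Suc t)" by (simp add: mm_assoc UU mm_diff_l)
  have aG: "\<alpha> *\<^sub>R G t = Wt ** X t - U ** V t - X (Suc t)" using ih by (simp add: algebra_simps)
  have "X (Suc (Suc t)) = X (Suc t) + W ** X (Suc t) - Wt ** X t - \<alpha> *\<^sub>R G (Suc t) + \<alpha> *\<^sub>R G t"
    using step by (simp add: mm_add_l scaleR_diff_right algebra_simps)
  also have "\<dots> = W ** X (Suc t) - U ** V t - \<alpha> *\<^sub>R G (Suc t)"
    unfolding aG by (simp add: algebra_simps)
  also have "\<dots> = Wt ** X (Suc t) - U ** V (Suc t) - \<alpha> *\<^sub>R G (Suc t)"
    using V UUX by (simp add: mm_add_r algebra_simps)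
  finally show ?case by (simp add: G_def V_def)
qed
  thus ?thesis by (simp add: X_def Y_def)
qed


lemma sum_PiE_node:
  fixes S :: "'n::finite \<Rightarrow> 'b set" and h :: "'b \<Rightarrow> real"
  assumes fin: "\<And>m. finite (S m)"
  shows "(\<Sum>c\<in>PiE UNIV S. h (c n)) = (\<Sum>i\<in>S n. h i) * (\<Prod>m\<in>UNIV-{n}. real (card (S m)))"
proof -
  define F where "F m j = (if m = n then h j else 1)" for m j
  have "(\<Prod>m\<in>UNIV. \<Sum>j\<in>S m. F m j) = (\<Sum>c\<in>PiE UNIV S. \<Prod>m\<in>UNIV. F m (c m))"
    by (rule prod_sum_PiE) (auto simp: fin)
  also have "\<dots> = (\<Sum>c\<in>PiE UNIV S. h (c n))"
  proof (rule sum.cong)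
    fix c
    have "(\<Prod>m\<in>UNIV. F m (c m)) = F n (c n) * (\<Prod>m\<in>UNIV-{n}. F m (c m))"
      by (simp add: prod.remove)
    also have "(\<Prod>m\<in>UNIV-{n}. F m (c m)) = 1" by (rule prod.neutral) (auto simp: F_def)
    finally show "(\<Prod>m\<in>UNIV. F m (c m)) = h (c n)" by (simp add: F_def)
  qed simp
  finally have 1: "(\<Sum>c\<in>PiE UNIV S. h (c n)) = (\<Prod>m\<in>UNIV. \<Sum>j\<in>S m. F m j)" ..
  have "(\<Prod>m\<in>UNIV. \<Sum>j\<in>S m. F m j) = (\<Sum>j\<in>S n. F n j) * (\<Prod>m\<in>UNIV-{n}. \<Sum>j\<in>S m. F m j)"
    by (simp add: prod.remove)
  also have "(\<Prod>m\<in>UNIV-{n}. \<Sum>j\<in>S m. F m j) = (\<Prod>m\<in>UNIV-{n}. real (card (S m)))"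
    by (rule prod.cong) (auto simp: F_def)
  finally show ?thesis using 1 by (simp add: F_def)
qed

lemma avg_node:
  fixes q :: "'n::finite \<Rightarrow> nat" and h :: "nat \<Rightarrow> real"
  assumes q: "\<And>m. q m > 0"
  shows "(\<Sum>c\<in>PiE UNIV (\<lambda>m. {..<q m}). h (c n)) / (\<Prod>m\<in>UNIV. real (q m))
       = (1 / real (q n)) * (\<Sum>i<q n. h i)"
proof -
  have "(\<Prod>m\<in>UNIV. real (q m)) = real (q n) * (\<Prod>m\<in>UNIV-{n}. real (q m))"
    by (simp add: prod.remove)
  moreover have "(\<Prod>m\<in>UNIV-{n}. real (q m)) > 0" using q by (intro prod_pos) auto
  moreover have qz: "\<And>m. q m \<noteq> 0" using q by (metis not_gr0)
  ultimately show ?thesis using q[of n]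
    by (simp add: sum_PiE_node qz)
qed

lemma avg_nodes:
  fixes q :: "'n::finite \<Rightarrow> nat" and h :: "'n \<Rightarrow> nat \<Rightarrow> real"
  assumes q: "\<And>m. q m > 0"
  shows "(\<Sum>c\<in>PiE UNIV (\<lambda>m. {..<q m}). \<Sum>n\<in>UNIV. h n (c n)) / (\<Prod>m\<in>UNIV. real (q m))
       = (\<Sum>n\<in>UNIV. (1 / real (q n)) * (\<Sum>i<q n. h n i))"
proof -
  have "(\<Sum>c\<in>PiE UNIV (\<lambda>m. {..<q m}). \<Sum>n\<in>UNIV. h n (c n))
      = (\<Sum>n\<in>UNIV. \<Sum>c\<in>PiE UNIV (\<lambda>m. {..<q m}). h n (c n))" by (rule sum.swap)
  also have "\<dots> / (\<Prod>m\<in>UNIV. real (q m))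
      = (\<Sum>n\<in>UNIV. (\<Sum>c\<in>PiE UNIV (\<lambda>m. {..<q m}). h n (c n)) / (\<Prod>m\<in>UNIV. real (q m)))"
    by (simp add: sum_divide_distrib)
  also have "\<dots> = (\<Sum>n\<in>UNIV. (1 / real (q n)) * (\<Sum>i<q n. h n i))"
  proof (rule sum.cong)
    fix n :: 'n
    show "(\<Sum>c\<in>PiE UNIV (\<lambda>m. {..<q m}). h n (c n)) / (\<Prod>m\<in>UNIV. real (q m))
        = (1 / real (q n)) * (\<Sum>i<q n. h n i)" by (rule avg_node[OF q])
  qed simp
  finally show ?thesis .
qed

lemma card_P: "card (PiE UNIV (\<lambda>m::'n::finite. {..<q m})) = (\<Prod>m\<in>UNIV. q m)"
  by (simp add: card_PiE)


definition avgP :: "('n::finite \<Rightarrow> nat) \<Rightarrow> (('n \<Rightarrow> nat) \<Rightarrow> real) \<Rightarrow> real" where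
  "avgP q F = (\<Sum>c\<in>PiE UNIV (\<lambda>n. {..<q n}). F c) / (\<Prod>n\<in>UNIV. real (q n))"

lemma condE_avg: "condE q t F om = avgP q (\<lambda>c. F (om(t := c)))"
  by (simp add: condE_def avgP_def)

lemma avg_add: "avgP q (\<lambda>c. F c + G c) = avgP q F + avgP q G"
  by (simp add: avgP_def sum.distrib add_divide_distrib)
lemma avg_diff: "avgP q (\<lambda>c. F c - G c) = avgP q F - avgP q G"
  by (simp add: avgP_def sum_subtractf diff_divide_distrib)
lemma avg_cmult: "avgP q (\<lambda>c. k * F c) = k * avgP q F"
  by (simp add: avgP_def sum_distrib_left)
lemma avg_const: "(\<And>n. q n > 0) \<Longrightarrow> avgP q (\<lambda>c. k) = k"
proof -
  assume q: "\<And>n. q n > 0"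
  have "card (PiE UNIV (\<lambda>n. {..<q n})) = (\<Prod>n\<in>UNIV. q n)" by (rule card_P)
  moreover have "(\<Prod>n\<in>UNIV. real (q n)) > 0" using q by (intro prod_pos) auto
  moreover have "\<And>a. q a \<noteq> 0" using q by (metis not_gr0)
  ultimately show ?thesis by (simp add: avgP_def)
qed
lemma avg_mono: "(\<And>n. q n > 0) \<Longrightarrow> (\<And>c. c \<in> PiE UNIV (\<lambda>n. {..<q n}) \<Longrightarrow> F c \<le> G c) \<Longrightarrow> avgP q F \<le> avgP q G"
proof -
  assume q: "\<And>n. q n > 0" and le: "\<And>c. c \<in> PiE UNIV (\<lambda>n. {..<q n}) \<Longrightarrow> F c \<le> G c"
  have "(\<Prod>n\<in>UNIV. real (q n)) > 0" using q by (intro prod_pos) auto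
  moreover have "(\<Sum>c\<in>PiE UNIV (\<lambda>n. {..<q n}). F c) \<le> (\<Sum>c\<in>PiE UNIV (\<lambda>n. {..<q n}). G c)"
    by (rule sum_mono) (rule le)
  ultimately show ?thesis unfolding avgP_def by (intro divide_right_mono) auto
qed
lemma avg_cong: "(\<And>c. c \<in> PiE UNIV (\<lambda>n. {..<q n}) \<Longrightarrow> F c = G c) \<Longrightarrow> avgP q F = avgP q G"
  unfolding avgP_def by (simp cong: sum.cong)
lemma avg_nodes': "(\<And>m. q m > 0) \<Longrightarrow> avgP q (\<lambda>c. \<Sum>n\<in>UNIV. h n (c n)) = (\<Sum>n\<in>UNIV. (1 / real (q n)) * (\<Sum>i<q n. h n i))"
  unfolding avgP_def by (rule avg_nodes)

lemma young: "0 < \<alpha> \<Longrightarrow> 0 < \<eta> \<Longrightarrow> - 2 * \<alpha> * (d \<bullet> e) \<le> 2 * \<alpha> * \<eta> * (norm d)\<^sup>2 + \<alpha> / (2 * \<eta>) * (norm e)\<^sup>2"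
  for d e :: "'a::real_inner"
proof -
  assume a: "0 < \<alpha>" and e: "0 < \<eta>"
  have nn: "(norm ((2 * \<eta>) *\<^sub>R d + e))\<^sup>2 = 4 * \<eta>^2 * (d \<bullet> d) + 4 * \<eta> * (d \<bullet> e) + e \<bullet> e"
    by (simp only: power2_norm_eq_inner) (simp add: inner_add_left inner_add_right inner_commute power2_eq_square algebra_simps)
  have "0 \<le> \<alpha> / (2 * \<eta>) * (norm ((2 * \<eta>) *\<^sub>R d + e))\<^sup>2" using a e by simp
  also have "\<dots> = \<alpha> / (2 * \<eta>) * (4 * \<eta>^2 * (d \<bullet> d) + 4 * \<eta> * (d \<bullet> e) + e \<bullet> e)"
    by (simp only: nn)
  also have "\<dots> = 2 * \<alpha> * \<eta> * (d \<bullet> d) + 2 * \<alpha> * (d \<bullet> e) + \<alpha> / (2 * \<eta>) * (e \<bullet> e)"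
    using e by (simp add: field_simps power2_eq_square)
  finally show ?thesis by (simp add: power2_norm_eq_inner)
qed


lemma vec_ident:
  fixes X1 WX1 WtX1 WtX Uv Uvs ag ags :: "'a::real_vector"
  shows "(X1 + WX1 - 2 *\<^sub>R WtX1) + (WtX1 - WtX) + (Uv + (WtX1 - WX1) - Uvs) + (ag - ags)
     = (X1 - WtX + Uv + ag) - (ags + Uvs)"
  by (simp add: scaleR_2 algebra_simps)

theorem lemma4:
  fixes E :: "'n::finite \<Rightarrow> 'n \<Rightarrow> bool"
    and W Wt :: "real^'n^'n"
    and q :: "'n \<Rightarrow> nat"
    and f :: "'n \<Rightarrow> nat \<Rightarrow> real^'p::finite \<Rightarrow> real"
    and g :: "'n \<Rightarrow> nat \<Rightarrow> real^'p \<Rightarrow> real^'p"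
    and \<mu> L \<alpha> \<eta> :: real
    and xs :: "real^'p" and vs :: "real^'p^'n" and x0 :: "real^'p^'n"
    and om :: "nat \<Rightarrow> 'n \<Rightarrow> nat"
    and t :: nat
  assumes E_sym: "\<And>n m. E n m \<Longrightarrow> E m n"
    and connected: "\<And>n m. E\<^sup>*\<^sup>* n m"
    and W_sparse: "\<And>n m. W$n$m \<noteq> 0 \<Longrightarrow> m = n \<or> E n m"
    and Wt_sparse: "\<And>n m. Wt$n$m \<noteq> 0 \<Longrightarrow> m = n \<or> E n m"
    and W_sym: "transpose W = W" and Wt_sym: "transpose Wt = Wt"
    and null_IWt: "(mat 1 - Wt) *v ones = 0"
    and null_IW: "{z. (mat 1 - W) *v z = 0} = span {ones}"
    and null_WtW: "{z. (Wt - W) *v z = 0} = span {ones}"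
    and W_le_Wt: "psd (Wt - W)"
    and Wt_le: "psd ((1/2) *\<^sub>R (mat 1 + W) - Wt)"
    and Wt_pd: "pd Wt"
    and q_pos: "\<And>n. 0 < q n"
    and grad: "\<And>n i x. i < q n \<Longrightarrow> (f n i has_derivative (\<lambda>h. g n i x \<bullet> h)) (at x)"
    and sconv: "\<And>n i. i < q n \<Longrightarrow> mu_strongly_convex \<mu> (f n i)"
    and lips: "\<And>n i. i < q n \<Longrightarrow> L-lipschitz_on UNIV (g n i)"
    and mu_pos: "0 < \<mu>" and L_pos: "0 < L"
    and xs_min: "\<And>z. (\<Sum>n\<in>UNIV. (1 / real (q n)) * (\<Sum>i<q n. f n i xs))
                     \<le> (\<Sum>n\<in>UNIV. (1 / real (q n)) * (\<Sum>i<q n. f n i z))"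
    and vs_range: "\<exists>w. vs = msqrt (Wt - W) ** w"
    and vs_opt: "\<alpha> *\<^sub>R (\<chi> n. (1 / real (q n)) *\<^sub>R (\<Sum>i<q n. g n i xs)) + msqrt (Wt - W) ** vs = 0"
    and alpha_pos: "0 < \<alpha>" and eta_pos: "0 < \<eta>"
    and om_valid: "\<And>s n. om s n < q n"
  shows
   "let xstar = (\<chi> n. xs) :: real^'p^'n;
        X = (\<lambda>om s. fst (dsa W Wt \<alpha> g q x0 om s));
        Y = (\<lambda>om s. snd (dsa W Wt \<alpha> g q x0 om s));
        V = (\<lambda>om s. dsa_v W Wt \<alpha> g q x0 om s);
        normG = (\<lambda>x v. qf Wt x + (norm v)\<^sup>2);
        pt = (\<Sum>n\<in>UNIV. (1 / real (q n)) * (\<Sum>i<q n.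
                f n i (Y om t n i) - f n i xs - g n i xs \<bullet> (Y om t n i - xs)));
        bregf = (\<Sum>n\<in>UNIV. (1 / real (q n)) * (\<Sum>i<q n.
                f n i (X om t $ n) - f n i xs - g n i xs \<bullet> (X om t $ n - xs)))
    in condE q t (\<lambda>w. normG (X w (Suc t) - xstar) (V w (Suc t) - vs)) om
       \<le> normG (X om t - xstar) (V om t - vs)
         - 2 * condE q t (\<lambda>w. qf (mat 1 + W - 2 *\<^sub>R Wt) (X w (Suc t) - xstar)) om
         + (4 * \<alpha> * L / \<eta>) * pt
         - condE q t (\<lambda>w. qf (Wt - (2 * \<alpha> * \<eta>) *\<^sub>R mat 1) (X w (Suc t) - X w t)) om
         - condE q t (\<lambda>w. (norm (V w (Suc t) - V w t))\<^sup>2) om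
         - (4 * \<alpha> * \<mu> / L - 2 * \<alpha> * (2 * L - \<mu>) / \<eta>) * bregf"
proof -
  have symWW: "transpose (Wt - W) = Wt - W"
  proof -
    have "transpose (Wt - W) = transpose Wt - transpose W" by (simp add: transpose_def vec_eq_iff)
    thus ?thesis using W_sym Wt_sym by simp
  qed
  define U where "U = msqrt (Wt - W)"
  have Uprops: "transpose U = U \<and> psd U \<and> U ** U = Wt - W"
    unfolding U_def by (rule msqrt_props[OF symWW W_le_Wt])
  hence symU: "transpose U = U" and UU: "U ** U = Wt - W" by auto
  define xstar :: "real^'p^'n" where "xstar = (\<chi> n. xs)"
  have onesIn: "ones \<in> span {ones}" by (rule span_base) simp
  have WtW1: "(Wt - W) *v ones = 0" using null_WtW onesIn by blast
  have IW1: "(mat 1 - W) *v ones = 0" using null_IW onesIn by blast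
  have Wx: "W ** xstar = xstar"
    using cons_zero[OF IW1, of xs] by (simp add: xstar_def mm_diff_l)
  have Wtx: "Wt ** xstar = xstar"
    using cons_zero[OF null_IWt, of xs] by (simp add: xstar_def mm_diff_l)
  define M where "M = mat 1 + W - 2 *\<^sub>R Wt"
  have "M ** xstar = xstar + xstar - 2 *\<^sub>R xstar"
    unfolding M_def mm_diff_l mm_add_l mm_scale_l Wx Wtx mm_id ..
  hence Mx: "M ** xstar = 0" by (simp add: scaleR_2)
  have Ux: "U ** xstar = 0"
  proof -
    have "(U ** xstar) \<bullet> (U ** xstar) = (U ** (U ** xstar)) \<bullet> xstar"
      by (rule sym_stack[OF symU])
    also have "U ** (U ** xstar) = 0"
      using cons_zero[OF WtW1, of xs] by (simp add: mm_assoc UU xstar_def)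
    finally show ?thesis by simp
  qed
  define gs :: "real^'p^'n" where "gs = (\<chi> n. (1 / real (q n)) *\<^sub>R (\<Sum>i<q n. g n i xs))"
  have vsopt: "\<alpha> *\<^sub>R gs + U ** vs = 0" using vs_opt by (simp add: gs_def U_def)
  define X where "X = (\<lambda>om s. fst (dsa W Wt \<alpha> g q x0 om s))"
  define Y where "Y = (\<lambda>om s. snd (dsa W Wt \<alpha> g q x0 om s))"
  define V where "V = (\<lambda>om s. dsa_v W Wt \<alpha> g q x0 om s)"
  define x where "x = X om t"
  define y where "y = Y om t"
  define v where "v = V om t"
  define gc where "gc c = ghat g q c x y" for c
  define x1 where "x1 c = Wt ** x - U ** v - \<alpha> *\<^sub>R gc c" for c
  define v1 where "v1 c = v + U ** x1 c" for c
  have dsa_t: "dsa W Wt \<alpha> g q x0 (om(t := c)) s = dsa W Wt \<alpha> g q x0 om s" if "s \<le> t" for c s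
    by (rule dsa_dep) (use that in auto)
  have Xt: "X (om(t := c)) t = x" for c by (simp add: X_def x_def dsa_t)
  have Yt: "Y (om(t := c)) t = y" for c by (simp add: Y_def y_def dsa_t)
  have Vt: "V (om(t := c)) t = v" for c by (simp add: V_def v_def dsa_v_def dsa_t)
  have Vdef: "V w s = (\<Sum>r\<le>s. U ** X w r)" for w s by (simp add: V_def X_def dsa_v_def U_def)
  have X1: "X (om(t := c)) (Suc t) = x1 c" for c
  proof -
    have "X (om(t := c)) (Suc t) = Wt ** X (om(t := c)) t - U ** V (om(t := c)) t
        - \<alpha> *\<^sub>R ghat g q ((om(t := c)) t) (X (om(t := c)) t) (Y (om(t := c)) t)"
      unfolding X_def Y_def Vdef[unfolded X_def] by (rule dsa_rec[OF UU])
    thus ?thesis by (simp add: Xt Yt Vt x1_def gc_def)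
  qed
  have V1: "V (om(t := c)) (Suc t) = v1 c" for c
  proof -
    have "V (om(t := c)) (Suc t) = V (om(t := c)) t + U ** X (om(t := c)) (Suc t)"
      by (simp add: Vdef)
    thus ?thesis by (simp add: Vt X1 v1_def)
  qed
  have pw: "qf Wt (x1 c - xstar) + (norm (v1 c - vs))\<^sup>2
     \<le> (qf Wt (x - xstar) + (norm (v - vs))\<^sup>2) - qf (Wt - (2*\<alpha>*\<eta>) *\<^sub>R mat 1) (x1 c - x)
        - (norm (v1 c - v))\<^sup>2 - 2 * qf M (x1 c - xstar)
        - 2*\<alpha>*((x - xstar) \<bullet> (gc c - gs)) + \<alpha>/(2*\<eta>) * (norm (gc c - gs))\<^sup>2" for c
  proof -
    define a where "a = x1 c - xstar"
    define b where "b = x - xstar"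
    define d where "d = x1 c - x"
    define e where "e = gc c - gs"
    have abd: "b = a - d" by (simp add: a_def b_def d_def)
    have "M ** a = M ** x1 c" by (simp only: a_def mm_diff_r Mx diff_zero)
    also have "\<dots> = x1 c + W ** x1 c - 2 *\<^sub>R (Wt ** x1 c)"
      by (simp add: M_def mm_diff_l mm_add_l mm_scale_l)
    finally have e1: "M ** a = x1 c + W ** x1 c - 2 *\<^sub>R (Wt ** x1 c)" .
    have e2: "Wt ** d = Wt ** x1 c - Wt ** x" by (simp add: d_def mm_diff_r)
    have e3: "U ** (v1 c - vs) = U ** v + (Wt ** x1 c - W ** x1 c) - U ** vs"
      by (simp add: v1_def mm_diff_r mm_add_r mm_assoc UU mm_diff_l)
    have e4: "\<alpha> *\<^sub>R e = \<alpha> *\<^sub>R gc c - \<alpha> *\<^sub>R gs" by (simp add: e_def scaleR_diff_right)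
    have R0: "M ** a + Wt ** d + U ** (v1 c - vs) + \<alpha> *\<^sub>R e
        = (x1 c - Wt ** x + U ** v + \<alpha> *\<^sub>R gc c) - (\<alpha> *\<^sub>R gs + U ** vs)"
      unfolding e1 e2 e3 e4 by (rule vec_ident)
    also have "\<dots> = 0" using vsopt by (simp add: x1_def)
    finally have R: "M ** a + Wt ** d + U ** (v1 c - vs) + \<alpha> *\<^sub>R e = 0" .
    hence "a \<bullet> (M ** a + Wt ** d + U ** (v1 c - vs) + \<alpha> *\<^sub>R e) = 0" by simp
    hence I1: "qf M a + a \<bullet> (Wt ** d) + a \<bullet> (U ** (v1 c - vs)) + \<alpha> * (a \<bullet> e) = 0"
      by (simp add: inner_add_right qf_eq)
    have "a \<bullet> (U ** (v1 c - vs)) = (U ** a) \<bullet> (v1 c - vs)" by (rule sym_stack[OF symU])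
    also have "U ** a = v1 c - v" by (simp add: a_def mm_diff_r Ux v1_def)
    finally have I2: "a \<bullet> (U ** (v1 c - vs)) = (v1 c - v) \<bullet> (v1 c - vs)" .
    have dWa: "d \<bullet> (Wt ** a) = a \<bullet> (Wt ** d)"
      using sym_stack[OF Wt_sym, of d a] by (simp add: inner_commute)
    have I3: "qf Wt b = qf Wt a - 2 * (a \<bullet> (Wt ** d)) + qf Wt d"
      using dWa by (simp add: qf_eq abd mm_diff_r inner_diff_left inner_diff_right)
    have I4: "(norm (v - vs))\<^sup>2 = (norm (v1 c - vs))\<^sup>2 - 2 * ((v1 c - v) \<bullet> (v1 c - vs)) + (norm (v1 c - v))\<^sup>2"
    proof -
      have "v - vs = (v1 c - vs) - (v1 c - v)" by simp
      hence "(norm (v - vs))\<^sup>2 = (norm ((v1 c - vs) - (v1 c - v)))\<^sup>2" by metis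
      also have "\<dots> = (norm (v1 c - vs))\<^sup>2 - 2 * ((v1 c - v) \<bullet> (v1 c - vs)) + (norm (v1 c - v))\<^sup>2"
        by (simp only: power2_norm_eq_inner) (simp add: inner_diff_left inner_diff_right inner_commute)
      finally show ?thesis .
    qed
    have I5: "qf (Wt - (2*\<alpha>*\<eta>) *\<^sub>R mat 1) d = qf Wt d - 2*\<alpha>*\<eta> * (norm d)\<^sup>2"
      by (simp add: qf_diff qf_scale_id)
    have I6: "a \<bullet> e = b \<bullet> e + d \<bullet> e" by (simp add: abd inner_diff_left)
    have Y: "- 2 * \<alpha> * (d \<bullet> e) \<le> 2 * \<alpha> * \<eta> * (norm d)\<^sup>2 + \<alpha> / (2 * \<eta>) * (norm e)\<^sup>2"
      by (rule young[OF alpha_pos eta_pos])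
    have "\<alpha> * (a \<bullet> e) = \<alpha> * (b \<bullet> e) + \<alpha> * (d \<bullet> e)" using I6 by (simp add: distrib_left)
    show ?thesis
      unfolding a_def[symmetric] b_def[symmetric] d_def[symmetric] e_def[symmetric] I5
      using I1 I2 I3 I4 Y \<open>\<alpha> * (a \<bullet> e) = \<alpha> * (b \<bullet> e) + \<alpha> * (d \<bullet> e)\<close> by linarith
  qed
  define En where "En n i = g n i (x$n) - g n i (y n i) + (1 / real (q n)) *\<^sub>R (\<Sum>j<q n. g n j (y n j))
        - (1 / real (q n)) *\<^sub>R (\<Sum>j<q n. g n j xs)" for n i
  have ecomp: "(gc c - gs)$n = En n (c n)" for c n
    by (simp add: gc_def gs_def ghat_def En_def)
  have ecomp': "gc c $ n - gs $ n = En n (c n)" for c n using ecomp[of c n] by simp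
  have BE: "(x - xstar) \<bullet> (gc c - gs) = (\<Sum>n\<in>UNIV. (x$n - xs) \<bullet> En n (c n))" for c
    by (subst inner_vec_def) (simp add: ecomp' xstar_def)
  have EE: "(norm (gc c - gs))\<^sup>2 = (\<Sum>n\<in>UNIV. (norm (En n (c n)))\<^sup>2)" for c
  proof -
    have "(norm (gc c - gs))\<^sup>2 = (gc c - gs) \<bullet> (gc c - gs)" by (rule power2_norm_eq_inner)
    also have "\<dots> = (\<Sum>n\<in>UNIV. (gc c - gs)$n \<bullet> (gc c - gs)$n)" by (rule inner_vec_def)
    also have "\<dots> = (\<Sum>n\<in>UNIV. (norm (En n (c n)))\<^sup>2)" by (simp add: ecomp ecomp' power2_norm_eq_inner)
    finally show ?thesis .
  qed
  define dx where "dx n = (1 / real (q n)) * (\<Sum>i<q n. f n i (x$n) - f n i xs - g n i xs \<bullet> (x$n - xs))" for n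
  define dy where "dy n = (1 / real (q n)) * (\<Sum>i<q n. f n i (y n i) - f n i xs - g n i xs \<bullet> (y n i - xs))" for n
  have NB: "(2*\<mu>/L) * dx n \<le> (1 / real (q n)) * (\<Sum>i<q n. (x$n - xs) \<bullet> En n i)
      \<and> (1 / real (q n)) * (\<Sum>i<q n. (norm (En n i))\<^sup>2) \<le> 4 * L * dx n + 4 * L * dy n
      \<and> 0 \<le> dx n \<and> 0 \<le> dy n \<and> 0 \<le> (L - \<mu>) * dx n" for n
  proof -
    interpret nd: node "f n" "g n" "q n" \<mu> L
      using grad sconv lips mu_pos L_pos by unfold_locales auto
    have 1: "(2*\<mu>/L) * dx n \<le> (1 / real (q n)) * (\<Sum>i<q n. (x$n - xs) \<bullet> En n i)"
      using nd.node_N1[OF q_pos, of "x$n" xs "y n"] by (simp add: dx_def En_def nd.Dg_def)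
    have 2: "(1 / real (q n)) * (\<Sum>i<q n. (norm (En n i))\<^sup>2) \<le> 4 * L * dx n + 4 * L * dy n"
      using nd.node_N2[of "x$n" "y n" xs] by (simp add: dx_def dy_def En_def nd.Dg_def)
    have 3: "0 \<le> dx n" "0 \<le> dy n" "0 \<le> (L - \<mu>) * dx n"
      using nd.node_N3(1)[of "x$n" xs] nd.node_N3(2)[of "y n" xs] nd.node_N3(3)[of "x$n" xs]
      by (simp_all add: dx_def dy_def nd.Dg_def)
    show ?thesis using 1 2 3 by blast
  qed
  define Dx where "Dx = (\<Sum>n\<in>UNIV. dx n)"
  define Dy where "Dy = (\<Sum>n\<in>UNIV. dy n)"
  have avgBE: "avgP q (\<lambda>c. (x - xstar) \<bullet> (gc c - gs)) = (\<Sum>n\<in>UNIV. (1 / real (q n)) * (\<Sum>i<q n. (x$n - xs) \<bullet> En n i))"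
    unfolding BE using avg_nodes'[OF q_pos, where h="\<lambda>n i. (x$n - xs) \<bullet> En n i"] by simp
  have avgEE: "avgP q (\<lambda>c. (norm (gc c - gs))\<^sup>2) = (\<Sum>n\<in>UNIV. (1 / real (q n)) * (\<Sum>i<q n. (norm (En n i))\<^sup>2))"
    unfolding EE using avg_nodes'[OF q_pos, where h="\<lambda>n i. (norm (En n i))\<^sup>2"] by simp
  have lowBE: "(2*\<mu>/L) * Dx \<le> avgP q (\<lambda>c. (x - xstar) \<bullet> (gc c - gs))"
  proof -
    have "(2*\<mu>/L) * Dx = (\<Sum>n\<in>UNIV. (2*\<mu>/L) * dx n)" by (simp add: Dx_def sum_distrib_left)
    also have "\<dots> \<le> (\<Sum>n\<in>UNIV. (1 / real (q n)) * (\<Sum>i<q n. (x$n - xs) \<bullet> En n i))"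
      by (rule sum_mono) (use NB in blast)
    finally show ?thesis unfolding avgBE .
  qed
  have upEE: "avgP q (\<lambda>c. (norm (gc c - gs))\<^sup>2) \<le> 4 * L * Dx + 4 * L * Dy"
  proof -
    have "avgP q (\<lambda>c. (norm (gc c - gs))\<^sup>2) \<le> (\<Sum>n\<in>UNIV. 4 * L * dx n + 4 * L * dy n)"
      unfolding avgEE by (rule sum_mono) (use NB in blast)
    thus ?thesis by (simp add: Dx_def Dy_def sum.distrib sum_distrib_left)
  qed
  have Dx0: "0 \<le> Dx" unfolding Dx_def by (rule sum_nonneg) (use NB in blast)
  have Dy0: "0 \<le> Dy" unfolding Dy_def by (rule sum_nonneg) (use NB in blast)
  have LDx: "0 \<le> (L - \<mu>) * Dx"
  proof -
    have "0 \<le> (\<Sum>n\<in>UNIV. (L - \<mu>) * dx n)" by (rule sum_nonneg) (use NB in blast)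
    thus ?thesis by (simp add: Dx_def sum_distrib_left)
  qed
  define B where "B = avgP q (\<lambda>c. (x - xstar) \<bullet> (gc c - gs))"
  define Ee where "Ee = avgP q (\<lambda>c. (norm (gc c - gs))\<^sup>2)"
  have fin: "- 2*\<alpha>*B + \<alpha>/(2*\<eta>) * Ee \<le> (4 * \<alpha> * L / \<eta>) * Dy - (4 * \<alpha> * \<mu> / L - 2 * \<alpha> * (2 * L - \<mu>) / \<eta>) * Dx"
  proof -
    have h1: "2*\<alpha>*((2*\<mu>/L) * Dx) \<le> 2*\<alpha>*B" using lowBE alpha_pos unfolding B_def by (intro mult_left_mono) auto
    have h2: "\<alpha>/(2*\<eta>) * Ee \<le> \<alpha>/(2*\<eta>) * (4 * L * Dx + 4 * L * Dy)"
      using upEE alpha_pos eta_pos unfolding Ee_def by (intro mult_left_mono) auto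
    have h3: "\<alpha>/(2*\<eta>) * (4 * L * Dx + 4 * L * Dy) = (2*\<alpha>*L/\<eta>) * Dx + (2*\<alpha>*L/\<eta>) * Dy"
      using eta_pos by (simp add: field_simps)
    have h4: "(2*\<alpha>*L/\<eta>) * Dy \<le> (4 * \<alpha> * L / \<eta>) * Dy"
      using Dy0 alpha_pos eta_pos L_pos by (intro mult_right_mono) (auto simp: divide_right_mono)
    have "0 \<le> (2*\<alpha>/\<eta>) * ((L - \<mu>) * Dx)" using LDx alpha_pos eta_pos by simp
    moreover have "(2 * \<alpha> * (2 * L - \<mu>) / \<eta>) * Dx - (2*\<alpha>*L/\<eta>) * Dx = (2*\<alpha>/\<eta>) * ((L - \<mu>) * Dx)"
      using eta_pos by (simp add: field_simps)
    ultimately have h5: "(2*\<alpha>*L/\<eta>) * Dx \<le> (2 * \<alpha> * (2 * L - \<mu>) / \<eta>) * Dx" by linarith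
    have h6: "2*\<alpha>*((2*\<mu>/L) * Dx) = (4 * \<alpha> * \<mu> / L) * Dx" by simp
    have h7: "(4 * \<alpha> * \<mu> / L - 2 * \<alpha> * (2 * L - \<mu>) / \<eta>) * Dx
        = (4 * \<alpha> * \<mu> / L) * Dx - (2 * \<alpha> * (2 * L - \<mu>) / \<eta>) * Dx" by (simp add: left_diff_distrib)
    show ?thesis using h1 h2 h3 h4 h5 h6 h7 by linarith
  qed
  have main: "avgP q (\<lambda>c. qf Wt (x1 c - xstar) + (norm (v1 c - vs))\<^sup>2)
      \<le> (qf Wt (x - xstar) + (norm (v - vs))\<^sup>2) - 2 * avgP q (\<lambda>c. qf M (x1 c - xstar))
        + (4 * \<alpha> * L / \<eta>) * Dy - avgP q (\<lambda>c. qf (Wt - (2*\<alpha>*\<eta>) *\<^sub>R mat 1) (x1 c - x))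
        - avgP q (\<lambda>c. (norm (v1 c - v))\<^sup>2) - (4 * \<alpha> * \<mu> / L - 2 * \<alpha> * (2 * L - \<mu>) / \<eta>) * Dx"
  proof -
    have "avgP q (\<lambda>c. qf Wt (x1 c - xstar) + (norm (v1 c - vs))\<^sup>2)
      \<le> avgP q (\<lambda>c. (qf Wt (x - xstar) + (norm (v - vs))\<^sup>2) - qf (Wt - (2*\<alpha>*\<eta>) *\<^sub>R mat 1) (x1 c - x)
        - (norm (v1 c - v))\<^sup>2 - 2 * qf M (x1 c - xstar)
        - 2*\<alpha>*((x - xstar) \<bullet> (gc c - gs)) + \<alpha>/(2*\<eta>) * (norm (gc c - gs))\<^sup>2)"
      by (rule avg_mono[OF q_pos]) (rule pw)
    also have "\<dots> = (qf Wt (x - xstar) + (norm (v - vs))\<^sup>2) - avgP q (\<lambda>c. qf (Wt - (2*\<alpha>*\<eta>) *\<^sub>R mat 1) (x1 c - x))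
        - avgP q (\<lambda>c. (norm (v1 c - v))\<^sup>2) - 2 * avgP q (\<lambda>c. qf M (x1 c - xstar))
        - 2*\<alpha>*B + \<alpha>/(2*\<eta>) * Ee"
      by (simp only: avg_add avg_diff avg_cmult avg_const[OF q_pos] B_def Ee_def)
    finally show ?thesis using fin by linarith
  qed
  have X1u: "fst (dsa W Wt \<alpha> g q x0 (om(t := c)) (Suc t)) = x1 c" for c using X1[of c] by (simp add: X_def)
  have Xtu: "fst (dsa W Wt \<alpha> g q x0 (om(t := c)) t) = x" for c using Xt[of c] by (simp add: X_def)
  have V1u: "dsa_v W Wt \<alpha> g q x0 (om(t := c)) (Suc t) = v1 c" for c using V1[of c] by (simp add: V_def)
  have Vtu: "dsa_v W Wt \<alpha> g q x0 (om(t := c)) t = v" for c using Vt[of c] by (simp add: V_def)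
  have xu: "fst (dsa W Wt \<alpha> g q x0 om t) = x" by (simp add: x_def X_def)
  have yu: "snd (dsa W Wt \<alpha> g q x0 om t) = y" by (simp add: y_def Y_def)
  have vu: "dsa_v W Wt \<alpha> g q x0 om t = v" by (simp add: v_def V_def)
  show ?thesis
    unfolding Let_def condE_avg X1u Xtu V1u Vtu xu yu vu
    by (rule main[unfolded Dx_def Dy_def dx_def dy_def xstar_def M_def])
qed


end
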